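(* Let $\alpha=\{a_k\}_{k\ge1}$ be a sequence of positive integers such that $A(m):=\#\{k: a_k=m\}$ satisfies $A(m)=O(m^\nu)$ for some $\nu>0$. Then $\lim_{N\to\infty}E[U_j^N]=I(\alpha;j)<\infty$ for all $j\ge2$.
   Context: For $N\ge2$, coupon type $k\in\{1,\dots,N\}$ has probability $a_k/\sum_{i=1}^Na_i$; $U_j^N$ is the number of empty album places of the $j$-th collector when the first collector completes her set (each collector passes duplicates to the next one), with $$E[U_j^N]=\sum_{k=1}^N\int_0^\infty a_k e^{-a_k t}\frac{(a_kt)^{j-1}}{(j-1)!}\prod_{i\ne k,\,1\le i\le N}\big(1-e^{-a_i t}\big)\,dt.$$ $x_\alpha:=\inf\{x\in[0,1]:\sum_k x^{a_k}=\infty\}$, $L(x;\alpha;j):=\sum_{k}a_k^j\frac{x^{a_k}}{1-x^{a_k}}$, $F(x;\alpha):=\prod_{k}(1-x^{a_k})$, $I(\alpha;j):=\frac{1}{(j-1)!}\int_0^{x_\alpha}L(x;\alpha;j)F(x;\alpha)|\ln x|^{j-1}\frac{dx}{x}$. *)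

theory Defs
  imports "HOL-Analysis.Analysis" "HOL-Library.Landau_Symbols"
begin

text \<open>The sequence alpha is a :: nat => nat, used only at indices k >= 1.\<close>

definition mult_count :: "(nat \<Rightarrow> nat) \<Rightarrow> nat \<Rightarrow> nat" where
  "mult_count a m = card {k. 1 \<le> k \<and> a k = m}"

text \<open>E[U_j^N], given by the integral formula of the paper.\<close>
definition EU :: "(nat \<Rightarrow> nat) \<Rightarrow> nat \<Rightarrow> nat \<Rightarrow> real" where
  "EU a N j = (\<Sum>k\<in>{1..N}. LINT t:{0..}|lborel.
      real (a k) * exp (- real (a k) * t) * (real (a k) * t) ^ (j - 1) / fact (j - 1)
      * (\<Prod>i\<in>{1..N} - {k}. 1 - exp (- real (a i) * t)))"

definition x_alpha :: "(nat \<Rightarrow> nat) \<Rightarrow> real" where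
  "x_alpha a = Inf {x \<in> {0..1}. \<not> summable (\<lambda>k. x ^ a (Suc k))}"

definition L_fun :: "real \<Rightarrow> (nat \<Rightarrow> nat) \<Rightarrow> nat \<Rightarrow> real" where
  "L_fun x a j = (\<Sum>k. real (a (Suc k)) ^ j * x ^ a (Suc k) / (1 - x ^ a (Suc k)))"

definition F_fun :: "real \<Rightarrow> (nat \<Rightarrow> nat) \<Rightarrow> real" where
  "F_fun x a = (\<Prod>k. 1 - x ^ a (Suc k))"

definition I_integrand :: "(nat \<Rightarrow> nat) \<Rightarrow> nat \<Rightarrow> real \<Rightarrow> real" where
  "I_integrand a j x = L_fun x a j * F_fun x a * \<bar>ln x\<bar> ^ (j - 1) / x"

definition I_val :: "(nat \<Rightarrow> nat) \<Rightarrow> nat \<Rightarrow> real" where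
  "I_val a j = (1 / fact (j - 1)) * (LINT x:{0<..<x_alpha a}|lborel. I_integrand a j x)"

end

theory Submission
  imports Defs "HOL-Probability.Distributions"
begin


lemma pow_succ_diff:
  fixes y :: real assumes "0 \<le> y"
  shows "(y+1)^(Suc n) - y^(Suc n) \<le> real (Suc n) * (y+1)^n"
proof (induction n)
  case 0 then show ?case by simp
next
  case (Suc n)
  have "y^(Suc n) \<le> (y+1)^(Suc n)" using assms by (intro power_mono) auto
  have "(y+1)^(Suc (Suc n)) - y^(Suc (Suc n)) = (y+1)*((y+1)^(Suc n) - y^(Suc n)) + y^(Suc n)"
    by (simp add: algebra_simps)
  also have "\<dots> \<le> (y+1)*(real (Suc n) * (y+1)^n) + (y+1)^(Suc n)"
    using Suc.IH \<open>y^(Suc n) \<le> (y+1)^(Suc n)\<close> assms by (intro add_mono mult_left_mono) auto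
  also have "\<dots> = real (Suc (Suc n)) * (y+1)^(Suc n)" by (simp add: algebra_simps)
  finally show ?case .
qed

lemma aux1: fixes x A vv pp c B uu ww :: real
  assumes "(1-x)*A + vv*pp \<le> c*B" "(uu-vv)*pp \<le> (c*ww)*pp"
  shows "(1-x)*(A + uu*pp) + uu*(x*pp) \<le> c*(B + ww*pp)"
  using assms by (simp add: algebra_simps)

lemma psum_step:
  fixes x :: real assumes "0 \<le> x" "x < 1"
  shows "(1-x) * (\<Sum>m=1..M. real m ^ Suc q * x^m) + real M ^ Suc q * x^(Suc M)
           \<le> real (Suc q) * (\<Sum>m=1..M. real m ^ q * x^m)"
proof (induction M)
  case 0 then show ?case by simp
next
  case (Suc M)
  have d: "(real M+1)^(Suc q) - real M^(Suc q) \<le> real (Suc q) * (real M+1)^q"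
    by (rule pow_succ_diff) simp
  have "((real M+1)^(Suc q) - real M^(Suc q)) * x^(Suc M) \<le> (real (Suc q) * (real M+1)^q) * x^(Suc M)"
    using d assms by (intro mult_right_mono) auto
  have e1: "(\<Sum>m=1..Suc M. real m ^ Suc q * x^m) = (\<Sum>m=1..M. real m ^ Suc q * x^m) + (real M+1)^Suc q * x^(Suc M)"
    by (simp add: add.commute)
  have e2: "(\<Sum>m=1..Suc M. real m ^ q * x^m) = (\<Sum>m=1..M. real m ^ q * x^m) + (real M+1)^q * x^(Suc M)"
    by (simp add: add.commute)
  have e3: "x^(Suc (Suc M)) = x * x^(Suc M)" by simp
  have e0: "real (Suc M) = real M + 1" by simp
  show ?case unfolding e1 e2 e3 e0
    by (rule aux1[OF Suc.IH]) (use \<open>((real M+1)^(Suc q) - real M^(Suc q)) * x^(Suc M) \<le> _\<close> in simp)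
qed

lemma psum_bound:
  fixes x :: real assumes "0 \<le> x" "x < 1"
  shows "(\<Sum>m=1..M. real m ^ q * x^m) \<le> fact q * x / (1-x)^(Suc q)"
proof (induction q arbitrary: M)
  case 0
  have "(1-x) * (\<Sum>m=1..M. x^m) = x - x^(Suc M)"
  proof (induction M)
    case (Suc M)
    have "(\<Sum>m=1..Suc M. x^m) = (\<Sum>m=1..M. x^m) + x^(Suc M)"
      by simp
    then have "(1-x)*(\<Sum>m=1..Suc M. x^m) = (1-x)*(\<Sum>m=1..M. x^m) + (1-x)*x^(Suc M)"
      by (simp only: distrib_left)
    also have "\<dots> = x - x^(Suc M) + (x^(Suc M) - x * x^(Suc M))" unfolding Suc.IH 
      by (simp only: left_diff_distrib mult_1)
    finally show ?case by simp
  qed simp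
  then have "(1-x) * (\<Sum>m=1..M. x^m) \<le> x" using assms by simp
  then have "(\<Sum>m=1..M. x^m) \<le> x / (1-x)" using assms
    by (subst pos_le_divide_eq) (auto simp: mult.commute)
  then show ?case by simp
next
  case (Suc q)
  have "(1-x) * (\<Sum>m=1..M. real m ^ Suc q * x^m) \<le> real (Suc q) * (\<Sum>m=1..M. real m ^ q * x^m)"
  proof -
    have "0 \<le> real M ^ Suc q * x^(Suc M)" using assms by simp
    then show ?thesis using psum_step[OF assms, where M=M and q=q] by linarith
  qed
  also have "\<dots> \<le> real (Suc q) * (fact q * x / (1-x)^(Suc q))"
    using Suc.IH by (intro mult_left_mono) auto
  finally have "(\<Sum>m=1..M. real m ^ Suc q * x^m) \<le> real (Suc q) * (fact q * x / (1-x)^(Suc q)) / (1-x)"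
    using assms by (subst pos_le_divide_eq) (auto simp: mult.commute)
  also have "\<dots> = fact (Suc q) * x / (1-x)^(Suc (Suc q))"
    using assms by (simp add: divide_simps)
  finally show ?case .
qed



locale coup =
  fixes a :: "nat \<Rightarrow> nat" and j q :: nat and C :: real
  assumes pos: "\<And>k. 1 \<le> k \<Longrightarrow> a k > 0"
    and fin: "\<And>m. finite {k. 1 \<le> k \<and> a k = m}"
    and Cpos: "C > 0"
    and Abound: "\<And>m. real (mult_count a m) * real m ^ j \<le> C * real m ^ q"
    and j2: "j \<ge> 2"
begin

definition Kc where "Kc = C * fact q"

lemma b_pos: "a (Suc k) \<ge> 1" using pos[of "Suc k"] by simp

lemma card_le: "card {k. k < N \<and> a (Suc k) = m} \<le> mult_count a m"
proof -
  have "Suc ` {k. k < N \<and> a (Suc k) = m} \<subseteq> {k. 1 \<le> k \<and> a k = m}" by auto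
  then have "card (Suc ` {k. k < N \<and> a (Suc k) = m}) \<le> mult_count a m"
    unfolding mult_count_def by (intro card_mono fin)
  then show ?thesis by (simp add: card_image)
qed

lemma L1:
  fixes x :: real assumes x: "0 \<le> x" "x < 1"
  shows "(\<Sum>k<N. real (a (Suc k)) ^ j * x ^ a (Suc k)) \<le> Kc * x / (1-x)^(Suc q)"
proof -
  define g where "g k = a (Suc k)" for k
  define Mx where "Mx = (\<Sum>k<N. g k)"
  have sub: "g ` {..<N} \<subseteq> {1..Mx}"
  proof
    fix y assume "y \<in> g ` {..<N}"
    then obtain k where k: "k < N" "y = g k" by auto
    have "g k \<le> Mx" unfolding Mx_def using k by (intro member_le_sum) auto
    then show "y \<in> {1..Mx}" using k b_pos[of k] by (auto simp: g_def)
  qed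
  have "(\<Sum>k<N. real (g k) ^ j * x ^ g k)
      = (\<Sum>m\<in>{1..Mx}. \<Sum>k\<in>{k. k \<in> {..<N} \<and> g k = m}. real (g k) ^ j * x ^ g k)"
    by (rule sum.group[symmetric]) (use sub in auto)
  also have "\<dots> = (\<Sum>m\<in>{1..Mx}. real (card {k. k < N \<and> a (Suc k) = m}) * (real m ^ j * x ^ m))"
    by (intro sum.cong refl) (simp add: g_def)
  also have "\<dots> \<le> (\<Sum>m\<in>{1..Mx}. real (mult_count a m) * (real m ^ j * x ^ m))"
    using card_le x by (intro sum_mono mult_right_mono) auto
  also have "\<dots> \<le> (\<Sum>m\<in>{1..Mx}. C * (real m ^ q * x ^ m))"
  proof (intro sum_mono)
    fix m
    have "real (mult_count a m) * real m ^ j * x ^ m \<le> C * real m ^ q * x^m"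
      using Abound[of m] x by (intro mult_right_mono) auto
    then show "real (mult_count a m) * (real m ^ j * x ^ m) \<le> C * (real m ^ q * x ^ m)"
      by (simp add: mult.assoc)
  qed
  also have "\<dots> = C * (\<Sum>m=1..Mx. real m ^ q * x ^ m)" by (simp add: sum_distrib_left)
  also have "\<dots> \<le> C * (fact q * x / (1-x)^(Suc q))"
    using psum_bound[OF x] Cpos by (intro mult_left_mono) auto
  finally show ?thesis by (simp add: g_def Kc_def)
qed

lemma pow_le_x: fixes x :: real assumes "0 \<le> x" "x \<le> 1" shows "x ^ a (Suc k) \<le> x"
  using power_decreasing[of 1 "a (Suc k)" x] b_pos[of k] assms by simp

lemma Lterm_le:
  fixes x :: real assumes x: "0 \<le> x" "x < 1"
  shows "real (a (Suc k)) ^ j * x ^ a (Suc k) / (1 - x ^ a (Suc k)) \<le> real (a (Suc k)) ^ j * x ^ a (Suc k) / (1 - x)"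
proof -
  have "x ^ a (Suc k) \<le> x" using pow_le_x x by simp
  then show ?thesis using x by (intro divide_left_mono mult_nonneg_nonneg) auto
qed

lemma Lterm_nonneg:
  fixes x :: real assumes x: "0 \<le> x" "x < 1"
  shows "0 \<le> real (a (Suc k)) ^ j * x ^ a (Suc k) / (1 - x ^ a (Suc k))"
proof -
  have "x ^ a (Suc k) \<le> x" using pow_le_x x by simp
  then show ?thesis using x by (intro divide_nonneg_pos mult_nonneg_nonneg) auto
qed

definition Ls where "Ls N x = (\<Sum>k<N. real (a (Suc k)) ^ j * x ^ a (Suc k) / (1 - x ^ a (Suc k)))"
definition Fs where "Fs N x = (\<Prod>k<N. 1 - x ^ a (Suc k))"

lemma Ls_le:
  fixes x :: real assumes x: "0 \<le> x" "x < 1"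
  shows "Ls N x \<le> Kc * x / (1-x)^(Suc (Suc q))"
proof -
  have "Ls N x \<le> (\<Sum>k<N. real (a (Suc k)) ^ j * x ^ a (Suc k) / (1 - x))"
    unfolding Ls_def using Lterm_le[OF x] by (intro sum_mono) auto
  also have "\<dots> = (\<Sum>k<N. real (a (Suc k)) ^ j * x ^ a (Suc k)) / (1-x)"
    by (simp add: sum_divide_distrib)
  also have "\<dots> \<le> (Kc * x / (1-x)^(Suc q)) / (1-x)"
    using L1[OF x] x by (intro divide_right_mono) auto
  also have "\<dots> = Kc * x / (1-x)^(Suc (Suc q))" by simp
  finally show ?thesis .
qed

lemma L_summable:
  fixes x :: real assumes x: "0 \<le> x" "x < 1"
  shows "summable (\<lambda>k. real (a (Suc k)) ^ j * x ^ a (Suc k) / (1 - x ^ a (Suc k)))"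
  by (rule summableI_nonneg_bounded[where x="Kc * x / (1-x)^(Suc (Suc q))"])
     (use Lterm_nonneg[OF x] Ls_le[OF x] in \<open>auto simp: Ls_def\<close>)

lemma Ls_lim:
  fixes x :: real assumes x: "0 \<le> x" "x < 1"
  shows "(\<lambda>N. Ls N x) \<longlonglongrightarrow> L_fun x a j"
  unfolding Ls_def L_fun_def using summable_LIMSEQ[OF L_summable[OF x]] by simp

lemma L_le:
  fixes x :: real assumes x: "0 \<le> x" "x < 1"
  shows "L_fun x a j \<le> Kc * x / (1-x)^(Suc (Suc q))"
  unfolding L_fun_def
  by (rule suminf_le_const[OF L_summable[OF x]]) (use Ls_le[OF x] in \<open>auto simp: Ls_def\<close>)

lemma x_summable:
  fixes x :: real assumes x: "0 \<le> x" "x < 1"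
  shows "summable (\<lambda>k. x ^ a (Suc k))"
proof (rule summableI_nonneg_bounded[where x="Kc * x / (1-x)^(Suc q)"])
  fix N
  have "(\<Sum>k<N. x ^ a (Suc k)) \<le> (\<Sum>k<N. real (a (Suc k)) ^ j * x ^ a (Suc k))"
  proof (intro sum_mono)
    fix k
    have "1 \<le> real (a (Suc k)) ^ j" using b_pos[of k] by simp
    then show "x ^ a (Suc k) \<le> real (a (Suc k)) ^ j * x ^ a (Suc k)"
      using x by (simp add: mult_le_cancel_right1)
  qed
  then show "(\<Sum>k<N. x ^ a (Suc k)) \<le> Kc * x / (1-x)^(Suc q)" using L1[OF x, of N] by linarith
qed (use x in auto)

lemma x_alpha_eq: "x_alpha a = 1"
proof -
  have "{x \<in> {0..1}. \<not> summable (\<lambda>k. x ^ a (Suc k))} = {1::real}"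
  proof (intro equalityI subsetI)
    fix x :: real assume "x \<in> {x \<in> {0..1}. \<not> summable (\<lambda>k. x ^ a (Suc k))}"
    then show "x \<in> {1}" using x_summable[of x] by force
  next
    fix x :: real assume "x \<in> {1}"
    moreover have "\<not> summable (\<lambda>k. (1::real))"
      by (metis LIMSEQ_unique summable_LIMSEQ_zero tendsto_const zero_neq_one)
    ultimately show "x \<in> {x \<in> {0..1}. \<not> summable (\<lambda>k. x ^ a (Suc k))}" by simp
  qed
  then show ?thesis unfolding x_alpha_def by simp
qed

lemma Fs_lim:
  fixes x :: real assumes x: "0 \<le> x" "x < 1"
  shows "(\<lambda>N. Fs N x) \<longlonglongrightarrow> F_fun x a"
proof -
  have "summable (\<lambda>k. norm ((1 - x ^ a (Suc k)) - 1))"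
    using x_summable[OF x] x by simp
  then have "convergent_prod (\<lambda>k. 1 - x ^ a (Suc k))"
    by (intro abs_convergent_prod_imp_convergent_prod summable_imp_abs_convergent_prod)
  then have "(\<lambda>n. \<Prod>k\<le>n. 1 - x ^ a (Suc k)) \<longlonglongrightarrow> F_fun x a"
    unfolding F_fun_def by (rule convergent_prod_LIMSEQ)
  then have "(\<lambda>n. Fs (n+1) x) \<longlonglongrightarrow> F_fun x a"
    by (simp add: Fs_def lessThan_Suc_atMost)
  then show ?thesis by (rule LIMSEQ_offset)
qed

lemma Fs_nonneg: fixes x :: real assumes "0 \<le> x" "x \<le> 1" shows "0 \<le> Fs N x"
  unfolding Fs_def using assms by (intro prod_nonneg) (auto simp: power_le_one)

lemma Fs_mono: fixes x :: real assumes x: "0 \<le> x" "x \<le> 1" "M \<le> N" shows "Fs N x \<le> Fs M x"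
proof -
  have "Fs N x = Fs M x * (\<Prod>k\<in>{M..<N}. 1 - x ^ a (Suc k))"
    unfolding Fs_def using x by (metis prod.atLeastLessThan_concat lessThan_atLeast0 zero_le)
  also have "\<dots> \<le> Fs M x * 1"
    using x by (intro mult_left_mono prod_le_1 Fs_nonneg) (auto simp: power_le_one)
  finally show ?thesis by simp
qed

lemma Fs_small: fixes x :: real assumes x: "0 \<le> x" "x \<le> 1"
  shows "Fs M x \<le> (\<Prod>k<M. real (a (Suc k))) * (1-x)^M"
proof -
  have "Fs M x \<le> (\<Prod>k<M. real (a (Suc k)) * (1-x))"
    unfolding Fs_def
  proof (intro prod_mono conjI)
    fix k
    show "0 \<le> 1 - x ^ a (Suc k)" using x by (simp add: power_le_one)
    have "1 + real (a (Suc k)) * (-(1-x)) \<le> (1 + (-(1-x))) ^ a (Suc k)"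
      by (rule Bernoulli_inequality) (use x in auto)
    then show "1 - x ^ a (Suc k) \<le> real (a (Suc k)) * (1-x)" by (simp add: algebra_simps)
  qed
  also have "\<dots> = (\<Prod>k<M. real (a (Suc k))) * (1-x)^M"
    by (simp add: prod.distrib)
  finally show ?thesis .
qed

end


lemma exp_nat: "exp (- real n * t) = exp (-t) ^ n"
  using exp_of_nat_mult[of n "-t"] by simp

lemma erl_int: assumes "l > 0" shows "integrable lborel (erlang_density k l)"
proof (rule integrableI_nonneg)
  show "erlang_density k l \<in> borel_measurable lborel" by measurable
  show "AE x in lborel. 0 \<le> erlang_density k l x" using assms by simp
  have "(\<integral>\<^sup>+x. ennreal (erlang_density k l x * x^0) \<partial>lborel) = fact (k+0) / (fact k * l^0)"
    by (rule nn_integral_erlang_ith_moment[OF assms])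
  then show "(\<integral>\<^sup>+x. ennreal (erlang_density k l x) \<partial>lborel) < \<infinity>" by simp
qed

context coup begin

definition tm where "tm N k t = real (a k) * exp (- real (a k) * t) * (real (a k) * t) ^ (j - 1) / fact (j - 1)
      * (\<Prod>i\<in>{1..N} - {k}. 1 - exp (- real (a i) * t))"

definition fN where "fN N t = (\<Sum>k\<in>{1..N}. tm N k t)"

lemma tm_meas[measurable]: "tm N k \<in> borel_measurable lborel"
  unfolding tm_def by measurable

lemma tm_bound:
  assumes k: "k \<in> {1..N}" and t: "0 \<le> t"
  shows "0 \<le> tm N k t \<and> tm N k t \<le> erlang_density (j-1) (real (a k)) t"
proof -
  have ak: "real (a k) > 0" using pos k by auto
  define P where "P = (\<Prod>i\<in>{1..N} - {k}. 1 - exp (- real (a i) * t))"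
  have P01: "0 \<le> P \<and> P \<le> 1" unfolding P_def
    using t by (auto intro!: prod_nonneg prod_le_1 simp: mult_nonneg_nonneg)
  define E where "E = real (a k) * exp (- real (a k) * t) * (real (a k) * t) ^ (j - 1) / fact (j - 1)"
  have E0: "0 \<le> E" unfolding E_def using t ak by auto
  have "E = erlang_density (j-1) (real (a k)) t"
  proof -
    have "Suc (j-1) = j" using j2 by simp
    then have "real (a k) ^ Suc (j-1) = real (a k) * real (a k) ^ (j-1)" by (metis power_Suc)
    then show ?thesis using t unfolding E_def erlang_density_def
      by (simp add: power_mult_distrib mult_ac)
  qed
  moreover have "tm N k t = E * P" unfolding tm_def E_def P_def by simp
  ultimately show ?thesis using P01 E0 by (simp add: mult_left_le)
qed

lemma tm_int: assumes k: "k \<in> {1..N}"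
  shows "integrable lborel (\<lambda>t. indicator {0..} t *\<^sub>R tm N k t)"
proof (rule Bochner_Integration.integrable_bound)
  show "integrable lborel (erlang_density (j-1) (real (a k)))"
    using pos k by (intro erl_int) auto
  show "(\<lambda>t. indicator {0..} t *\<^sub>R tm N k t) \<in> borel_measurable lborel" by measurable
  show "AE t in lborel. norm (indicator {0..} t *\<^sub>R tm N k t) \<le> norm (erlang_density (j-1) (real (a k)) t)"
  proof (intro AE_I2)
    fix t :: real
    show "norm (indicator {0..} t *\<^sub>R tm N k t) \<le> norm (erlang_density (j-1) (real (a k)) t)"
    proof (cases "0 \<le> t")
      case True
      then show ?thesis using tm_bound[OF k True] by (auto simp: indicator_def)
    next
      case False
      then show ?thesis by (auto simp: indicator_def)
    qed
  qed
qed

lemma EU_eq: "EU a N j = integral\<^sup>L lborel (\<lambda>t. indicator {0..} t * fN N t)"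
proof -
  have "EU a N j = (\<Sum>k\<in>{1..N}. integral\<^sup>L lborel (\<lambda>t. indicator {0..} t *\<^sub>R tm N k t))"
    unfolding EU_def tm_def set_lebesgue_integral_def by simp
  also have "\<dots> = integral\<^sup>L lborel (\<lambda>t. \<Sum>k\<in>{1..N}. indicator {0..} t *\<^sub>R tm N k t)"
    using Bochner_Integration.integral_sum[where I="{1..N}" and M=lborel and f="\<lambda>k t. indicator {0..} t *\<^sub>R tm N k t"] tm_int
    by simp
  also have "\<dots> = integral\<^sup>L lborel (\<lambda>t. indicator {0..} t * fN N t)"
    unfolding fN_def by (simp add: sum_distrib_left)
  finally show ?thesis .
qed

lemma fN_pointwise:
  assumes t: "0 < t"
  shows "fN N t = t^(j-1) / fact (j-1) * Ls N (exp (-t)) * Fs N (exp (-t))"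
proof -
  define x where "x = exp (-t)"
  have x: "0 < x" "x < 1" unfolding x_def using t by auto
  have xk: "x ^ a k < 1" if "1 \<le> k" for k
    using x pos[OF that] power_decreasing[of 1 "a k" x] by auto
  define PF where "PF = (\<Prod>i\<in>{1..N}. 1 - x ^ a i)"
  have "tm N k t = t^(j-1) / fact (j-1) * (real (a k) ^ j * x ^ a k / (1 - x ^ a k)) * PF"
    if k: "k \<in> {1..N}" for k
  proof -
    have ne: "1 - x ^ a k \<noteq> 0" using xk[of k] k by auto
    have "PF = (1 - x ^ a k) * (\<Prod>i\<in>{1..N} - {k}. 1 - x ^ a i)"
      unfolding PF_def using k by (simp add: prod.remove)
    then have pr: "(\<Prod>i\<in>{1..N} - {k}. 1 - x ^ a i) = PF / (1 - x ^ a k)"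
      using ne by (simp add: field_simps)
    have sj: "real (a k) ^ j = real (a k) * real (a k) ^ (j-1)"
    proof -
      have "Suc (j-1) = j" using j2 by simp
      then show ?thesis by (metis power_Suc)
    qed
    show ?thesis unfolding tm_def exp_nat x_def[symmetric] pr sj
      by (simp add: power_mult_distrib field_simps)
  qed
  then have "fN N t = (\<Sum>k\<in>{1..N}. t^(j-1) / fact (j-1) * (real (a k) ^ j * x ^ a k / (1 - x ^ a k)) * PF)"
    unfolding fN_def by (intro sum.cong) auto
  also have "\<dots> = t^(j-1) / fact (j-1) * (\<Sum>k\<in>{1..N}. real (a k) ^ j * x ^ a k / (1 - x ^ a k)) * PF"
    by (simp add: sum_distrib_left sum_distrib_right)
  also have "\<dots> = t^(j-1) / fact (j-1) * Ls N x * Fs N x"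
    unfolding Ls_def Fs_def PF_def
    using sum.atLeast1_atMost_eq[of "\<lambda>k. real (a k) ^ j * x ^ a k / (1 - x ^ a k)" N]
          prod.atLeast1_atMost_eq[of "\<lambda>k. 1 - x ^ a k" N] by simp
  finally show ?thesis unfolding x_def .
qed

end


context coup begin

definition M0 where "M0 = Suc (Suc q)"
definition P0 where "P0 = (\<Prod>k<M0. real (a (Suc k)))"
definition G where "G t = indicator {0<..} t * (t^(j-1) / fact (j-1) * L_fun (exp (-t)) a j * F_fun (exp (-t)) a)"
definition W where "W t = Kc * P0 * erlang_density (j-1) 1 t"

lemma fN_meas[measurable]: "fN N \<in> borel_measurable lborel"
  unfolding fN_def by measurable

lemma tm_zero: "tm N k 0 = 0"
proof -
  have "j - 1 \<noteq> 0" using j2 by simp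
  then show ?thesis unfolding tm_def by simp
qed

lemma fN_zero: "fN N 0 = 0" unfolding fN_def by (simp add: tm_zero)

lemma Ls_nonneg: fixes x :: real assumes "0 \<le> x" "x < 1" shows "0 \<le> Ls N x"
  unfolding Ls_def using Lterm_nonneg[OF assms] by (intro sum_nonneg) auto

lemma conv: "(\<lambda>N. indicator {0..} t * fN N t) \<longlonglongrightarrow> G t"
proof (cases "0 < t")
  case True
  define x where "x = exp (-t)"
  have x: "0 \<le> x" "x < 1" unfolding x_def using True by auto
  have "(\<lambda>N. t^(j-1) / fact (j-1) * Ls N x * Fs N x) \<longlonglongrightarrow> t^(j-1) / fact (j-1) * L_fun x a j * F_fun x a"
    by (intro tendsto_mult tendsto_const Ls_lim[OF x] Fs_lim[OF x])
  then show ?thesis using True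
    by (simp add: fN_pointwise G_def x_def indicator_def)
next
  case False
  then have "t = 0 \<or> t < 0" by auto
  then show ?thesis
    by (auto simp: G_def fN_zero indicator_def)
qed

lemma W_nonneg: "0 \<le> W t"
proof -
  have "0 \<le> Kc" unfolding Kc_def using Cpos by simp
  moreover have "0 \<le> P0" unfolding P0_def by (intro prod_nonneg) auto
  ultimately show ?thesis unfolding W_def by simp
qed

lemma bound: assumes N: "M0 \<le> N" shows "norm (indicator {0..} t * fN N t) \<le> W t"
proof (cases "0 < t")
  case True
  define x where "x = exp (-t)"
  have x: "0 \<le> x" "x < 1" unfolding x_def using True by auto
  have L0: "0 \<le> Ls N x" using Ls_nonneg[OF x] .
  have F0: "0 \<le> Fs N x" using Fs_nonneg x by simp
  have "Ls N x * Fs N x \<le> (Kc * x / (1-x)^M0) * Fs N x"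
    using Ls_le[OF x, of N] F0 by (intro mult_right_mono) (auto simp: M0_def)
  also have "\<dots> \<le> (Kc * x / (1-x)^M0) * (P0 * (1-x)^M0)"
  proof (intro mult_left_mono)
    show "Fs N x \<le> P0 * (1-x)^M0"
      using Fs_mono[of x M0 N] Fs_small[of x M0] x N unfolding P0_def by simp
    show "0 \<le> Kc * x / (1-x)^M0" unfolding Kc_def using Cpos x by simp
  qed
  also have "\<dots> = Kc * P0 * x" using x by (simp add: field_simps)
  finally have LF: "Ls N x * Fs N x \<le> Kc * P0 * x" .
  define c where "c = t^(j-1) / fact (j-1)"
  have e: "fN N t = c * (Ls N x * Fs N x)"
    using fN_pointwise[OF True, of N] by (simp add: x_def c_def mult.assoc)
  have c0: "0 \<le> c" using True by (simp add: c_def)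
  have "0 \<le> fN N t" unfolding e using c0 L0 F0 by simp
  moreover have "fN N t \<le> c * (Kc * P0 * x)" unfolding e by (rule mult_left_mono[OF LF c0])
  moreover have "c * (Kc * P0 * x) = W t"
    using True unfolding W_def erlang_density_def x_def c_def by simp
  ultimately show ?thesis using True by (simp add: indicator_def)
next
  case False
  then have "t = 0 \<or> t < 0" by auto
  then show ?thesis using W_nonneg[of t] by (auto simp: fN_zero indicator_def)
qed

lemma W_int: "integrable lborel W"
  unfolding W_def by (intro integrable_mult_right erl_int) simp

lemma G_meas: "G \<in> borel_measurable lborel"
  by (rule borel_measurable_LIMSEQ_real[OF conv]) measurable

lemma main_dct: "integrable lborel G \<and> (\<lambda>N. EU a N j) \<longlonglongrightarrow> integral\<^sup>L lborel G"
proof -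
  let ?s = "\<lambda>i t. indicator {0..} t * fN (i + M0) t"
  have lim: "AE t in lborel. (\<lambda>i. ?s i t) \<longlonglongrightarrow> G t"
    using LIMSEQ_ignore_initial_segment[OF conv, of _ M0] by auto
  have bd: "\<And>i. AE t in lborel. norm (?s i t) \<le> W t"
    using bound by auto
  have "integrable lborel G"
    by (rule integrable_dominated_convergence[OF G_meas _ W_int lim bd]) measurable
  moreover have "(\<lambda>i. integral\<^sup>L lborel (?s i)) \<longlonglongrightarrow> integral\<^sup>L lborel G"
    by (rule integral_dominated_convergence[OF G_meas _ W_int lim bd]) measurable
  then have "(\<lambda>i. EU a (i + M0) j) \<longlonglongrightarrow> integral\<^sup>L lborel G"
    by (simp add: EU_eq)
  then have "(\<lambda>N. EU a N j) \<longlonglongrightarrow> integral\<^sup>L lborel G"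
    by (rule LIMSEQ_offset)
  ultimately show ?thesis by simp
qed

end


context coup begin

definition G0 where "G0 t = t^(j-1) / fact (j-1) * L_fun (exp (-t)) a j * F_fun (exp (-t)) a"

lemma image_exp: "(\<lambda>t::real. exp (-t)) ` {0<..} = {0<..<1}"
proof (intro equalityI subsetI)
  fix x assume "x \<in> (\<lambda>t::real. exp (-t)) ` {0<..}"
  then show "x \<in> {0<..<1}" by auto
next
  fix x :: real assume x: "x \<in> {0<..<1}"
  then have "x = exp (- (- ln x))" "- ln x \<in> {0<..}" by auto
  then show "x \<in> (\<lambda>t::real. exp (-t)) ` {0<..}" by blast
qed

lemma I_meas: "(\<lambda>x. indicator {0<..<1} x *\<^sub>R I_integrand a j x) \<in> borel_measurable lborel"
proof (rule borel_measurable_LIMSEQ_real)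
  let ?u = "\<lambda>N x. indicator {0<..<1} x *\<^sub>R (Ls N x * Fs N x * \<bar>ln x\<bar> ^ (j-1) / x)"
  show "\<And>N. ?u N \<in> borel_measurable lborel"
    unfolding Ls_def Fs_def by measurable
  fix x :: real
  show "(\<lambda>N. ?u N x) \<longlonglongrightarrow> indicator {0<..<1} x *\<^sub>R I_integrand a j x"
  proof (cases "x \<in> {0<..<1}")
    case True
    then have x: "0 \<le> x" "x < 1" by auto
    have "(\<lambda>N. Ls N x * Fs N x * \<bar>ln x\<bar> ^ (j-1) / x) \<longlonglongrightarrow> L_fun x a j * F_fun x a * \<bar>ln x\<bar> ^ (j-1) / x"
      using True by (intro tendsto_intros Ls_lim[OF x] Fs_lim[OF x]) auto
    then show ?thesis using True by (simp add: I_integrand_def)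
  next
    case False
    then show ?thesis by simp
  qed
qed

lemma lebesgue_to_lborel:
  fixes f :: "real \<Rightarrow> real"
  assumes "f absolutely_integrable_on S" "(\<lambda>x. indicator S x *\<^sub>R f x) \<in> borel_measurable lborel"
  shows "set_integrable lborel S f"
  using assms integrable_completion unfolding set_integrable_def by blast

lemma lborel_to_lebesgue:
  fixes f :: "real \<Rightarrow> real"
  assumes "set_integrable lborel S f"
  shows "f absolutely_integrable_on S"
  using assms integrable_completion borel_measurable_integrable unfolding set_integrable_def by blast

lemma final: "set_integrable lborel {0<..<x_alpha a} (I_integrand a j)
         \<and> (\<lambda>N. EU a N j) \<longlonglongrightarrow> I_val a j"
proof -
  define c :: real where "c = fact (j-1)"
  have c0: "c > 0" unfolding c_def by simp
  have Gint: "integrable lborel G" and lim: "(\<lambda>N. EU a N j) \<longlonglongrightarrow> integral\<^sup>L lborel G"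
    using main_dct by auto
  have GG0: "(\<lambda>t. indicator {0<..} t *\<^sub>R G0 t) = G"
    by (auto simp: G_def G0_def fun_eq_iff)
  have si0: "set_integrable lborel {0<..} G0"
    unfolding set_integrable_def GG0 by (rule Gint)
  have v0: "(LINT t:{0<..}|lborel. G0 t) = integral\<^sup>L lborel G"
    unfolding set_lebesgue_integral_def GG0 ..
  define H where "H t = \<bar>- exp (- t)\<bar> *\<^sub>R I_integrand a j (exp (- t))" for t :: real
  have HG: "H t = c * G0 t" if "t \<in> {0<..}" for t
  proof -
    have "\<bar>ln (exp (-t))\<bar> = t" using that by simp
    then show ?thesis using that c0
      unfolding H_def I_integrand_def G0_def c_def by (simp add: field_simps)
  qed
  have siH: "set_integrable lborel {0<..} H"
  proof -
    have "set_integrable lborel {0<..} (\<lambda>t. c * G0 t)" using si0 by simp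
    then show ?thesis using set_integrable_cong[of lborel lborel "{0<..}" "{0<..}" H "\<lambda>t. c * G0 t"] HG
      by simp
  qed
  have vH: "integral {0<..} H = c * integral\<^sup>L lborel G"
  proof -
    have "integral {0<..} H = (LINT t:{0<..}|lborel. H t)"
      by (rule set_borel_integral_eq_integral(2)[symmetric, OF siH])
    also have "\<dots> = (LINT t:{0<..}|lborel. c * G0 t)"
      by (intro set_lebesgue_integral_cong) (auto simp: HG)
    also have "\<dots> = c * integral\<^sup>L lborel G" using v0 by simp
    finally show ?thesis .
  qed
  have "H absolutely_integrable_on {0<..} \<and> integral {0<..} H = c * integral\<^sup>L lborel G"
    using lborel_to_lebesgue[OF siH] vH by simp
  note Hfact = this
  have S: "{0::real<..} \<in> sets lebesgue" by (rule sets_completionI_sets) (simp add: borel_open)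
  have der: "\<And>t. t \<in> {0::real<..} \<Longrightarrow> ((\<lambda>t. exp (- t)) has_field_derivative - exp (- t)) (at t within {0<..})"
    by (auto intro!: derivative_eq_intros)
  have inj: "inj_on (\<lambda>t::real. exp (- t)) {0<..}" by (auto simp: inj_on_def)
  note cov = has_absolute_integral_change_of_variables_real[OF S der inj, where f="I_integrand a j" and b="c * integral\<^sup>L lborel G"]
  have "I_integrand a j absolutely_integrable_on ((\<lambda>t. exp (-t)) ` {0<..})
      \<and> integral ((\<lambda>t. exp (-t)) ` {0<..}) (I_integrand a j) = c * integral\<^sup>L lborel G"
    using cov Hfact unfolding H_def by simp
  then have ai: "I_integrand a j absolutely_integrable_on {0<..<1}"
      and vI: "integral {0<..<1} (I_integrand a j) = c * integral\<^sup>L lborel G"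
    unfolding image_exp by auto
  have si: "set_integrable lborel {0<..<1} (I_integrand a j)"
    by (rule lebesgue_to_lborel[OF ai I_meas])
  have "I_val a j = 1 / c * (LINT x:{0<..<1}|lborel. I_integrand a j x)"
    unfolding I_val_def x_alpha_eq c_def ..
  also have "\<dots> = 1 / c * integral {0<..<1} (I_integrand a j)"
    by (simp add: set_borel_integral_eq_integral(2)[OF si])
  also have "\<dots> = integral\<^sup>L lborel G" using vI c0 by simp
  finally have "I_val a j = integral\<^sup>L lborel G" .
  then show ?thesis using si lim x_alpha_eq by simp
qed

end


theorem corollary2:
  fixes a :: "nat \<Rightarrow> nat" and j :: nat
  assumes pos: "\<And>k. 1 \<le> k \<Longrightarrow> a k > 0"
    and fin: "\<And>m. finite {k. 1 \<le> k \<and> a k = m}"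
    and growth: "\<exists>\<nu>::real. \<nu> > 0 \<and> (\<lambda>m. real (mult_count a m)) \<in> O(\<lambda>m. real m powr \<nu>)"
    and j: "j \<ge> 2"
  shows "set_integrable lborel {0<..<x_alpha a} (I_integrand a j)
         \<and> (\<lambda>N. EU a N j) \<longlonglongrightarrow> I_val a j"
proof -
  obtain \<nu> :: real where nu: "\<nu> > 0" and big: "(\<lambda>m. real (mult_count a m)) \<in> O(\<lambda>m. real m powr \<nu>)"
    using growth by blast
  obtain c where c: "c > 0" and ev: "eventually (\<lambda>m. norm (real (mult_count a m)) \<le> c * norm (real m powr \<nu>)) at_top"
    using landau_o.bigE[OF big] by blast
  obtain N0 where N0: "\<And>m. m \<ge> N0 \<Longrightarrow> real (mult_count a m) \<le> c * real m powr \<nu>"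
    using ev unfolding eventually_at_top_linorder by auto
  define B where "B = (\<Sum>m<N0. real (mult_count a m))"
  define C where "C = c + B"
  define n where "n = nat \<lceil>\<nu>\<rceil>"
  define q where "q = n + j"
  have B0: "0 \<le> B" unfolding B_def by (intro sum_nonneg) auto
  have Cpos: "C > 0" unfolding C_def using c B0 by simp
  have A0: "mult_count a 0 = 0"
  proof -
    have "{k. 1 \<le> k \<and> a k = 0} = {}" using pos by fastforce
    then show ?thesis unfolding mult_count_def by (metis card.empty)
  qed
  have Abound: "real (mult_count a m) * real m ^ j \<le> C * real m ^ q" for m
  proof (cases "m = 0")
    case True
    have "q \<noteq> 0" unfolding q_def using j by simp
    then show ?thesis using A0 True by (simp add: power_0_left)
  next
    case False
    then have m1: "1 \<le> real m" by simp
    have p1: "1 \<le> real m powr \<nu>" using m1 nu by (simp add: ge_one_powr_ge_zero)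
    have Am: "real (mult_count a m) \<le> C * real m powr \<nu>"
    proof (cases "m \<ge> N0")
      case True
      then have "real (mult_count a m) \<le> c * real m powr \<nu>" by (rule N0)
      also have "\<dots> \<le> C * real m powr \<nu>" unfolding C_def using B0 p1 by (simp add: distrib_right)
      finally show ?thesis .
    next
      case False
      then have "real (mult_count a m) \<le> B" unfolding B_def
        by (intro member_le_sum[of m "{..<N0}" "\<lambda>m. real (mult_count a m)"]) auto
      also have "\<dots> \<le> B * real m powr \<nu>" using B0 p1 by (simp add: mult_le_cancel_left1)
      also have "\<dots> \<le> C * real m powr \<nu>" unfolding C_def using c p1 by (simp add: distrib_right)
      finally show ?thesis .
    qed
    have "real m powr \<nu> \<le> real m powr (real n)"
      using m1 unfolding n_def by (intro powr_mono) linarith+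
    also have "\<dots> = real m ^ n" using m1 by (simp add: powr_realpow)
    finally have pn: "real m powr \<nu> \<le> real m ^ n" .
    have "real (mult_count a m) * real m ^ j \<le> (C * real m ^ n) * real m ^ j"
      using Am pn Cpos by (intro mult_right_mono) (auto intro: order_trans)
    also have "\<dots> = C * real m ^ q" unfolding q_def by (simp add: power_add)
    finally show ?thesis .
  qed
  interpret coup a j q C
    by unfold_locales (use pos fin Cpos Abound j in auto)
  show ?thesis by (rule final)
qed


end
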